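(* Let $D_\infty=\mathbb{Z}/2\ast\mathbb{Z}/2$ be the infinite dihedral group. There is no finite generating set $S$ of $D_\infty$ (with $S=S^{-1}$, $e\notin S$) with respect to which $\kappa(g)=0$ for all $g\in D_\infty\smallsetminus\{e\}$.
   Context: For a group $G$ with finite generating set $S$ ($S=S^{-1}$, $e\notin S$), $|x|$ denotes the word length of $x\in G$ with respect to $S$. For $g\in G$ define $\mathrm{Av}(g)=\frac{1}{|S|}\sum_{a\in S}|a^{-1}ga|$, and for $g\neq e$ define the curvature $\kappa(g)=\frac{|g|-\mathrm{Av}(g)}{|g|}$. *)

theory Defs
  imports "HOL-Algebra.Group" "HOL-Algebra.Generated_Groups" Complex_Main
begin

definition word_length :: "('a, 'b) monoid_scheme \<Rightarrow> 'a set \<Rightarrow> 'a \<Rightarrow> nat" where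
  "word_length G S g =
     (LEAST n. \<exists>ws. length ws = n \<and> set ws \<subseteq> S \<and> foldr (\<otimes>\<^bsub>G\<^esub>) ws \<one>\<^bsub>G\<^esub> = g)"

definition Av :: "('a, 'b) monoid_scheme \<Rightarrow> 'a set \<Rightarrow> 'a \<Rightarrow> real" where
  "Av G S g = (1 / real (card S)) *
     (\<Sum>a\<in>S. real (word_length G S (inv\<^bsub>G\<^esub> a \<otimes>\<^bsub>G\<^esub> g \<otimes>\<^bsub>G\<^esub> a)))"

definition curvature :: "('a, 'b) monoid_scheme \<Rightarrow> 'a set \<Rightarrow> 'a \<Rightarrow> real" where
  "curvature G S g = (real (word_length G S g) - Av G S g) / real (word_length G S g)"

definition fin_sym_gen_set :: "('a, 'b) monoid_scheme \<Rightarrow> 'a set \<Rightarrow> bool" where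
  "fin_sym_gen_set G S \<longleftrightarrow> S \<subseteq> carrier G \<and> finite S \<and> generate G S = carrier G \<and>
     (\<forall>a\<in>S. inv\<^bsub>G\<^esub> a \<in> S) \<and> \<one>\<^bsub>G\<^esub> \<notin> S"

text \<open>The infinite dihedral group Z/2 * Z/2, realised as the isometry group of the
  integers: (n, b) is the map x \<mapsto> (if b then -x else x) + n; the product is composition.
  It is generated by the two involutions (0, True) and (1, True).\<close>
definition D_inf :: "(int \<times> bool) monoid" where
  "D_inf = \<lparr> carrier = UNIV,
             mult = (\<lambda>(n, b) (m, c). (n + (if b then - m else m), b \<noteq> c)),
             one = (0, False) \<rparr>"

lemma group_D_inf: "group D_inf"
proof (rule groupI)
  fix x assume "x \<in> carrier D_inf"
  obtain n b where x: "x = (n, b)" by fastforce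
  show "\<exists>y\<in>carrier D_inf. y \<otimes>\<^bsub>D_inf\<^esub> x = \<one>\<^bsub>D_inf\<^esub>"
    by (rule bexI[where x="(if b then n else - n, b)"]) (auto simp: D_inf_def x)
qed (auto simp: D_inf_def split: prod.splits)

end

theory Submission
  imports Defs
begin

lemma D_mult[simp]: "(n, b) \<otimes>\<^bsub>D_inf\<^esub> (m, c) = (n + (if b then - m else m), b \<noteq> c)"
  by (simp add: D_inf_def)

lemma D_one[simp]: "\<one>\<^bsub>D_inf\<^esub> = (0, False)"
  by (simp add: D_inf_def)

lemma D_carrier[simp]: "carrier D_inf = UNIV"
  by (simp add: D_inf_def)

lemma D_inv[simp]: "inv\<^bsub>D_inf\<^esub> (n, b) = (if b then n else - n, b)"
  by (rule group.inv_equality[OF group_D_inf]) auto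

lemma D_r_one[simp]: "x \<otimes>\<^bsub>D_inf\<^esub> (0, False) = x"
  by (cases x) simp

lemma D_l_one[simp]: "(0, False) \<otimes>\<^bsub>D_inf\<^esub> x = x"
  by (cases x) simp

lemma foldr_mult: "foldr (\<otimes>\<^bsub>D_inf\<^esub>) ws y = foldr (\<otimes>\<^bsub>D_inf\<^esub>) ws \<one>\<^bsub>D_inf\<^esub> \<otimes>\<^bsub>D_inf\<^esub> y"
proof (induction ws)
  case Nil
  then show ?case by simp
next
  case (Cons a ws)
  then show ?case using monoid.m_assoc[OF group.is_monoid[OF group_D_inf]] by simp
qed

lemma words_exist:
  assumes sym: "\<forall>a\<in>S. inv\<^bsub>D_inf\<^esub> a \<in> S" and x: "x \<in> generate D_inf S"
  shows "\<exists>ws. set ws \<subseteq> S \<and> foldr (\<otimes>\<^bsub>D_inf\<^esub>) ws \<one>\<^bsub>D_inf\<^esub> = x"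
  using x
proof (induction rule: generate.induct)
  case one
  then show ?case by (rule exI[of _ "[]"]) simp
next
  case (incl h)
  then show ?case by (intro exI[of _ "[h]"]) (auto simp: monoid.r_one[OF group.is_monoid[OF group_D_inf]])
next
  case (inv h)
  then show ?case using sym
    by (intro exI[of _ "[inv\<^bsub>D_inf\<^esub> h]"]) (auto simp: monoid.r_one[OF group.is_monoid[OF group_D_inf]] simp del: D_inv)
next
  case (eng h1 h2)
  then obtain w1 w2 where "set w1 \<subseteq> S" "foldr (\<otimes>\<^bsub>D_inf\<^esub>) w1 \<one>\<^bsub>D_inf\<^esub> = h1"
    "set w2 \<subseteq> S" "foldr (\<otimes>\<^bsub>D_inf\<^esub>) w2 \<one>\<^bsub>D_inf\<^esub> = h2" by blast
  then show ?case
    by (intro exI[of _ "w1 @ w2"]) (metis foldr_append foldr_mult set_append le_sup_iff)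
qed

lemma wl_ge1:
  assumes sym: "\<forall>a\<in>S. inv\<^bsub>D_inf\<^esub> a \<in> S" and gen: "generate D_inf S = carrier D_inf"
    and ne: "x \<noteq> \<one>\<^bsub>D_inf\<^esub>"
  shows "word_length D_inf S x \<ge> 1"
proof -
  have "\<exists>n ws. length ws = n \<and> set ws \<subseteq> S \<and> foldr (\<otimes>\<^bsub>D_inf\<^esub>) ws \<one>\<^bsub>D_inf\<^esub> = x"
    using words_exist[OF sym, of x] gen by auto
  then have "\<exists>ws. length ws = word_length D_inf S x \<and> set ws \<subseteq> S \<and> foldr (\<otimes>\<^bsub>D_inf\<^esub>) ws \<one>\<^bsub>D_inf\<^esub> = x"
    unfolding word_length_def by (rule LeastI_ex)
  then obtain ws where "length ws = word_length D_inf S x" "set ws \<subseteq> S"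
     "foldr (\<otimes>\<^bsub>D_inf\<^esub>) ws \<one>\<^bsub>D_inf\<^esub> = x" by blast
  then show ?thesis using ne by (cases ws) auto
qed

lemma wl_le1:
  assumes "x \<in> S" shows "word_length D_inf S x \<le> 1"
  unfolding word_length_def
  by (rule Least_le) (rule exI[of _ "[x]"], use assms in \<open>auto simp: monoid.r_one[OF group.is_monoid[OF group_D_inf]] simp del: D_one\<close>)

lemma wl_eq1:
  assumes sym: "\<forall>a\<in>S. inv\<^bsub>D_inf\<^esub> a \<in> S" and gen: "generate D_inf S = carrier D_inf"
    and "word_length D_inf S x = 1" shows "x \<in> S"
proof -
  have "\<exists>n ws. length ws = n \<and> set ws \<subseteq> S \<and> foldr (\<otimes>\<^bsub>D_inf\<^esub>) ws \<one>\<^bsub>D_inf\<^esub> = x"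
    using words_exist[OF sym, of x] gen by auto
  then have "\<exists>ws. length ws = word_length D_inf S x \<and> set ws \<subseteq> S \<and> foldr (\<otimes>\<^bsub>D_inf\<^esub>) ws \<one>\<^bsub>D_inf\<^esub> = x"
    unfolding word_length_def by (rule LeastI_ex)
  then obtain ws where "length ws = word_length D_inf S x" "set ws \<subseteq> S"
     "foldr (\<otimes>\<^bsub>D_inf\<^esub>) ws \<one>\<^bsub>D_inf\<^esub> = x" by blast
  then show ?thesis using assms(3)
    by (cases ws) (auto simp: monoid.r_one[OF group.is_monoid[OF group_D_inf]] simp del: D_one)
qed

lemma gen_sub:
  assumes "\<one>\<^bsub>D_inf\<^esub> \<in> H" "S \<subseteq> H" "\<And>h. h \<in> S \<Longrightarrow> inv\<^bsub>D_inf\<^esub> h \<in> H"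
    "\<And>x y. x \<in> H \<Longrightarrow> y \<in> H \<Longrightarrow> x \<otimes>\<^bsub>D_inf\<^esub> y \<in> H"
  shows "generate D_inf S \<subseteq> H"
proof
  fix x assume "x \<in> generate D_inf S" then show "x \<in> H"
    by (induction rule: generate.induct) (use assms in auto)
qed

lemma conj_ne_one: "g \<noteq> \<one>\<^bsub>D_inf\<^esub> \<Longrightarrow> inv\<^bsub>D_inf\<^esub> a \<otimes>\<^bsub>D_inf\<^esub> g \<otimes>\<^bsub>D_inf\<^esub> a \<noteq> \<one>\<^bsub>D_inf\<^esub>"
proof -
  assume ne: "g \<noteq> \<one>\<^bsub>D_inf\<^esub>"
  obtain k c where a: "a = (k, c)" by fastforce
  obtain n b where g: "g = (n, b)" by fastforce
  show ?thesis using ne unfolding a g by (cases b; cases c) simp_all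
qed

lemma closure:
  assumes fs: "fin_sym_gen_set D_inf S"
    and curv: "\<forall>g \<in> carrier D_inf. g \<noteq> \<one>\<^bsub>D_inf\<^esub> \<longrightarrow> curvature D_inf S g = 0"
    and g: "g \<in> S" and a: "a \<in> S"
  shows "inv\<^bsub>D_inf\<^esub> a \<otimes>\<^bsub>D_inf\<^esub> g \<otimes>\<^bsub>D_inf\<^esub> a \<in> S"
proof -
  from fs have sym: "\<forall>a\<in>S. inv\<^bsub>D_inf\<^esub> a \<in> S" and gen: "generate D_inf S = carrier D_inf"
    and fin: "finite S" and no: "\<one>\<^bsub>D_inf\<^esub> \<notin> S"
    unfolding fin_sym_gen_set_def by auto
  have gne: "g \<noteq> \<one>\<^bsub>D_inf\<^esub>" using g no by auto
  have w1: "word_length D_inf S g = 1"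
    using wl_ge1[OF sym gen gne] wl_le1[OF g] by linarith
  have "curvature D_inf S g = 0" using curv gne UNIV_I unfolding D_carrier by metis
  hence Av1: "Av D_inf S g = 1" unfolding curvature_def w1 by simp
  define f where "f b = real (word_length D_inf S (inv\<^bsub>D_inf\<^esub> b \<otimes>\<^bsub>D_inf\<^esub> g \<otimes>\<^bsub>D_inf\<^esub> b))" for b
  have cpos: "card S > 0" using g fin card_gt_0_iff by blast
  have sumS: "(\<Sum>b\<in>S. f b) = real (card S)"
    using Av1 cpos unfolding Av_def f_def by (simp add: field_simps)
  have fge: "\<And>b. f b \<ge> 1"
    unfolding f_def using wl_ge1[OF sym gen conj_ne_one[OF gne]] by simp
  have "(\<Sum>b\<in>S. f b - 1) = 0" using sumS by (simp add: sum_subtractf)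
  hence "\<forall>b\<in>S. f b - 1 = 0"
    using sum_nonneg_eq_0_iff[OF fin, of "\<lambda>b. f b - 1"] fge by simp
  hence "f a = 1" using a by simp
  hence "word_length D_inf S (inv\<^bsub>D_inf\<^esub> a \<otimes>\<^bsub>D_inf\<^esub> g \<otimes>\<^bsub>D_inf\<^esub> a) = 1"
    unfolding f_def by simp
  then show ?thesis using wl_eq1[OF sym gen] by blast
qed

lemma infinite_refl:
  assumes "\<And>j::nat. (m + 2 * int j * d, True) \<in> S" "d \<noteq> 0"
  shows "infinite S"
proof
  assume fin: "finite S"
  have "range (\<lambda>j::nat. (m + 2 * int j * d, True)) \<subseteq> S" using assms by auto
  hence "finite (range (\<lambda>j::nat. (m + 2 * int j * d, True)))" using fin finite_subset by blast
  moreover have "inj (\<lambda>j::nat. (m + 2 * int j * d, True))"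
    by (rule injI) (use assms(2) in auto)
  ultimately show False using finite_imageD by fastforce
qed

theorem mainTheorem5:
  shows "\<not> (\<exists>S. fin_sym_gen_set D_inf S \<and>
              (\<forall>g \<in> carrier D_inf. g \<noteq> \<one>\<^bsub>D_inf\<^esub> \<longrightarrow> curvature D_inf S g = 0))"
proof
  assume "\<exists>S. fin_sym_gen_set D_inf S \<and>
              (\<forall>g \<in> carrier D_inf. g \<noteq> \<one>\<^bsub>D_inf\<^esub> \<longrightarrow> curvature D_inf S g = 0)"
  then obtain S where fs: "fin_sym_gen_set D_inf S"
    and curv: "\<forall>g \<in> carrier D_inf. g \<noteq> \<one>\<^bsub>D_inf\<^esub> \<longrightarrow> curvature D_inf S g = 0" by blast
  note cl = closure[OF fs curv]
  from fs have sym: "\<forall>a\<in>S. inv\<^bsub>D_inf\<^esub> a \<in> S" and gen: "generate D_inf S = carrier D_inf"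
    and fin: "finite S" and no: "\<one>\<^bsub>D_inf\<^esub> \<notin> S"
    unfolding fin_sym_gen_set_def by auto
  have "\<exists>m. (m, True) \<in> S"
  proof (rule ccontr)
    assume "\<nexists>m. (m, True) \<in> S"
    hence "S \<subseteq> {x. snd x = False}" by auto
    hence "generate D_inf S \<subseteq> {x. snd x = False}"
      by (intro gen_sub) (auto split: prod.splits)
    hence "((0::int), True) \<in> {x. snd x = False}" using gen by (simp only: D_carrier subset_eq UNIV_I)
    then show False by simp
  qed
  then obtain m where m: "(m, True) \<in> S" by blast
  show False
  proof (cases "\<exists>k. (k, False) \<in> S")
    case True
    then obtain k where k: "(k, False) \<in> S" by blast
    have k0: "k \<noteq> 0" using k no by auto
    have "(m + 2 * int j * (- k), True) \<in> S" for j
    proof (induction j)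
      case 0 then show ?case using m by simp
    next
      case (Suc j)
      have "inv\<^bsub>D_inf\<^esub> (k, False) \<otimes>\<^bsub>D_inf\<^esub> (m + 2 * int j * (- k), True) \<otimes>\<^bsub>D_inf\<^esub> (k, False) \<in> S"
        by (rule cl[OF Suc k])
      then show ?case by (simp add: algebra_simps)
    qed
    then show False using infinite_refl[of m "- k" S] k0 fin by auto
  next
    case False
    show False
    proof (cases "\<exists>k. k \<noteq> m \<and> (k, True) \<in> S")
      case True
      then obtain k where k: "(k, True) \<in> S" "k \<noteq> m" by blast
      have "(m + 2 * int j * (k - m), True) \<in> S" for j
      proof (induction j)
        case 0 then show ?case using m by simp
      next
        case (Suc j)
        have "inv\<^bsub>D_inf\<^esub> (m, True) \<otimes>\<^bsub>D_inf\<^esub> (m + 2 * int j * (k - m), True) \<otimes>\<^bsub>D_inf\<^esub> (m, True) \<in> S"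
          by (rule cl[OF Suc m])
        hence "inv\<^bsub>D_inf\<^esub> (k, True) \<otimes>\<^bsub>D_inf\<^esub> (inv\<^bsub>D_inf\<^esub> (m, True) \<otimes>\<^bsub>D_inf\<^esub> (m + 2 * int j * (k - m), True) \<otimes>\<^bsub>D_inf\<^esub> (m, True)) \<otimes>\<^bsub>D_inf\<^esub> (k, True) \<in> S"
          by (rule cl[OF _ k(1)])
        then show ?case by (simp add: algebra_simps)
      qed
      then show False using infinite_refl[of m "k - m" S] k fin by auto
    next
      case False2: False
      have "S \<subseteq> {(m, True)}" 
      proof
        fix x assume x: "x \<in> S"
        obtain a b where ab: "x = (a, b)" by fastforce
        show "x \<in> {(m, True)}" using False False2 x unfolding ab by (cases b) auto
      qed
      hence "generate D_inf S \<subseteq> {(0, False), (m, True)}"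
        by (intro gen_sub) auto
      hence "(m + 1, True) \<in> {(0, False), (m, True)}" using gen by (simp only: D_carrier subset_eq UNIV_I)
      then show False by simp
    qed
  qed
qed

end
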